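(* Let $M=p_1^{n_1}\cdots p_K^{n_K}$ with distinct primes and $n_\nu\in\mathbb{N}$, and let $A\oplus B=\mathbb{Z}_M$. Then every fiber $Z=x*F_i$ ($x\in\mathbb{Z}_M$, $i\in\{1,\dots,K\}$) splits with parity $(A,B)$ or with parity $(B,A)$. In particular, for any $a\in\Sigma_A(Z)$ and $b\in\Sigma_B(Z)$ we have $\Sigma_A(Z)\subset\Pi(a,p_i^{n_i-1})$ and $\Sigma_B(Z)\subset\Pi(b,p_i^{n_i-1})$.
   Context: $A\oplus B=\mathbb{Z}_M$ means every element of $\mathbb{Z}_M$ is uniquely $a+b$ with $a\in A$, $b\in B$. $F_i=\{0,M/p_i,\dots,(p_i-1)M/p_i\}$, $x*F_i=\{x+f:f\in F_i\}$. $\Pi(y,p_i^\alpha)=\{y'\in\mathbb{Z}_M:p_i^\alpha\mid y-y'\}$. For $Z\subset\mathbb{Z}_M$, $\Sigma_A(Z)=\{a\in A: a+b\in Z\text{ for some }b\in B\}$, $\Sigma_B(Z)=\{b\in B: a+b\in Z\text{ for some }a\in A\}$. A fiber $Z=x*F_i$ splits with parity $(A,B)$ if $p_i^{n_i}\mid a-a'$ for all $a,a'\in\Sigma_A(Z)$ and, for all distinct $b,b'\in\Sigma_B(Z)$, $p_i^{n_i-1}\mid b-b'$ but $p_i^{n_i}\nmid b-b'$; parity $(B,A)$ is defined with $A,B$ interchanged. *)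

theory Defs
  imports "HOL-Computational_Algebra.Computational_Algebra"
begin

text \<open>Z_M is modelled by the residues {0..<M} (as naturals), with addition mod M.\<close>

definition ZM :: "nat \<Rightarrow> nat set" where
  "ZM M = {0..<M}"

definition tiling :: "nat \<Rightarrow> nat set \<Rightarrow> nat set \<Rightarrow> bool" where
  "tiling M A B \<longleftrightarrow> A \<subseteq> ZM M \<and> B \<subseteq> ZM M \<and>
     (\<forall>z \<in> ZM M. \<exists>!(a, b). a \<in> A \<and> b \<in> B \<and> (a + b) mod M = z)"

definition fiber :: "nat \<Rightarrow> nat \<Rightarrow> nat \<Rightarrow> nat set" where
  "fiber M p x = {(x + k * (M div p)) mod M | k. k < p}"

definition Pi_M :: "nat \<Rightarrow> nat \<Rightarrow> nat \<Rightarrow> nat set" where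
  "Pi_M M y q = {y' \<in> ZM M. int q dvd (int y - int y')}"

definition SigmaA :: "nat \<Rightarrow> nat set \<Rightarrow> nat set \<Rightarrow> nat set \<Rightarrow> nat set" where
  "SigmaA M A B Z = {a \<in> A. \<exists>b \<in> B. (a + b) mod M \<in> Z}"

definition SigmaB :: "nat \<Rightarrow> nat set \<Rightarrow> nat set \<Rightarrow> nat set \<Rightarrow> nat set" where
  "SigmaB M A B Z = {b \<in> B. \<exists>a \<in> A. (a + b) mod M \<in> Z}"

definition splits_with_parity :: "nat \<Rightarrow> nat \<Rightarrow> nat set \<Rightarrow> nat set \<Rightarrow> nat set \<Rightarrow> bool" where
  "splits_with_parity M p A B Z \<longleftrightarrow>
     (let n = multiplicity p M in
       (\<forall>a \<in> SigmaA M A B Z. \<forall>a' \<in> SigmaA M A B Z. int (p ^ n) dvd (int a - int a')) \<and>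
       (\<forall>b \<in> SigmaB M A B Z. \<forall>b' \<in> SigmaB M A B Z. b \<noteq> b' \<longrightarrow>
          int (p ^ (n - 1)) dvd (int b - int b') \<and> \<not> int (p ^ n) dvd (int b - int b')))"

end

theory Submission
  imports Defs
begin


lemma frob_two:
  fixes x y :: "'a::comm_ring_1"
  assumes q: "prime (q::nat)"
  shows "\<exists>h. (x + y) ^ q = x ^ q + y ^ q + of_nat q * h"
proof -
  have q1: "q > 1" using q prime_gt_1_nat by blast
  have "(x + y) ^ q = (\<Sum>k\<le>q. of_nat (q choose k) * x ^ k * y ^ (q - k))"
    by (rule binomial_ring)
  also have "{..q} = insert q (insert 0 {1..<q})" using q1 by auto
  also have "(\<Sum>k\<in>insert q (insert 0 {1..<q}). of_nat (q choose k) * x ^ k * y ^ (q - k))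
     = x ^ q + y ^ q + (\<Sum>k\<in>{1..<q}. of_nat (q choose k) * x ^ k * y ^ (q - k))"
    using q1 by (simp add: algebra_simps)
  also have "(\<Sum>k\<in>{1..<q}. of_nat (q choose k) * x ^ k * y ^ (q - k))
     = (\<Sum>k\<in>{1..<q}. of_nat q * (of_nat ((q choose k) div q) * x ^ k * y ^ (q - k)))"
  proof (rule sum.cong)
    fix k assume "k \<in> {1..<q}"
    then have "q dvd (q choose k)" using q q1 by (intro dvd_choose_prime) auto
    then have "q choose k = q * ((q choose k) div q)" by simp
    then have "(of_nat (q choose k) :: 'a) = of_nat q * of_nat ((q choose k) div q)"
      by (metis of_nat_mult)
    then show "of_nat (q choose k) * x ^ k * y ^ (q - k) = of_nat q * (of_nat ((q choose k) div q) * x ^ k * y ^ (q - k))"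
      by (simp add: algebra_simps)
  qed simp
  also have "\<dots> = of_nat q * (\<Sum>k\<in>{1..<q}. of_nat ((q choose k) div q) * x ^ k * y ^ (q - k))"
    by (simp add: sum_distrib_left)
  finally show ?thesis by blast
qed

definition Pol :: "nat set \<Rightarrow> int poly" where
  "Pol S = (\<Sum>s\<in>S. monom 1 s)"

lemma frob_set:
  assumes q: "prime (q::nat)" and "finite S"
  shows "\<exists>h. (Pol S) ^ q = (\<Sum>s\<in>S. monom 1 (q * s)) + of_nat q * h"
  using assms(2)
proof (induction S rule: finite_induct)
  case empty
  then show ?case using q by (simp add: Pol_def zero_power prime_gt_0_nat)
next
  case (insert s S)
  then obtain h where h: "(Pol S) ^ q = (\<Sum>s\<in>S. monom 1 (q * s)) + of_nat q * h" by blast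
  obtain h2 where h2: "(monom 1 s + Pol S) ^ q = (monom 1 s) ^ q + (Pol S) ^ q + of_nat q * h2"
    using frob_two[OF q] by blast
  have "Pol (insert s S) = monom 1 s + Pol S" using insert by (simp add: Pol_def)
  then have "(Pol (insert s S)) ^ q = monom 1 (q * s) + (\<Sum>s\<in>S. monom 1 (q * s)) + of_nat q * (h + h2)"
    using h h2 by (simp add: monom_power algebra_simps mult.commute)
  then show ?case using insert by auto
qed



definition U :: "nat \<Rightarrow> int poly" where "U M = (\<Sum>z<M. monom 1 z)"

lemma monom_add1: "monom (1::int) (a + b) = monom 1 a * monom 1 b"
  by (simp add: mult_monom)

lemma XM1_dvd_pow: "(monom (1::int) M - 1) dvd (monom 1 (M * k) - 1)"
proof -
  have "monom (1::int) (M * k) - 1 = (monom 1 M) ^ k - 1" by (simp add: monom_power)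
  also have "\<dots> = (monom 1 M - 1) * (\<Sum>i<k. (monom 1 M)^i)" by (rule power_diff_1_eq)
  finally show ?thesis by simp
qed

lemma XM1_dvd_mod: "(monom (1::int) M - 1) dvd (monom 1 n - monom 1 (n mod M))"
proof -
  have "n = n mod M + M * (n div M)" by simp
  then have "monom (1::int) n = monom 1 (n mod M) * monom 1 (M * (n div M))"
    by (metis monom_add1)
  then have "monom (1::int) n - monom 1 (n mod M) = monom 1 (n mod M) * (monom 1 (M * (n div M)) - 1)"
    by (simp add: algebra_simps)
  then show ?thesis using XM1_dvd_pow[of M "n div M"] by (metis dvd_mult)
qed

lemma XM1_dvd_sum:
  assumes "\<And>x. x \<in> S \<Longrightarrow> (monom (1::int) M - 1) dvd (f x - g x)"
  shows "(monom (1::int) M - 1) dvd (sum f S - sum g S)"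
proof -
  have "sum f S - sum g S = (\<Sum>x\<in>S. f x - g x)" by (simp add: sum_subtractf)
  then show ?thesis using assms by (simp add: dvd_sum)
qed

lemma U_geom: "(monom (1::int) 1 - 1) * U M = monom 1 M - 1"
proof -
  have "monom (1::int) M - 1 = (monom 1 1) ^ M - 1" by (simp add: monom_power)
  also have "\<dots> = (monom 1 1 - 1) * (\<Sum>i<M. (monom 1 1)^i)" by (rule power_diff_1_eq)
  also have "(\<Sum>i<M. (monom (1::int) 1)^i) = U M" by (simp add: U_def monom_power)
  finally show ?thesis by simp
qed

lemma mult_U: "(monom (1::int) M - 1) dvd (P * U M - smult (poly P 1) (U M))"
proof -
  have "poly (P - [:poly P 1:]) 1 = 0" by simp
  then have "[:-1, 1:] dvd (P - [:poly P 1:])" using poly_eq_0_iff_dvd[of "P - [:poly P 1:]" 1] by simp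
  moreover have "[:-1, 1:] = monom (1::int) 1 - 1"
    by (simp add: monom_Suc one_pCons)
  ultimately obtain g where g: "P - [:poly P 1:] = (monom 1 1 - 1) * g" by (auto elim: dvdE)
  have "P * U M - smult (poly P 1) (U M) = (P - [:poly P 1:]) * U M"
    by (simp add: algebra_simps)
  also have "\<dots> = g * ((monom 1 1 - 1) * U M)" unfolding g by (simp add: ac_simps)
  also have "\<dots> = g * (monom 1 M - 1)" by (simp only: U_geom)
  finally show ?thesis by simp
qed

lemma Pol_mult: "finite A \<Longrightarrow> finite B \<Longrightarrow> Pol A * Pol B = (\<Sum>(a,b)\<in>A\<times>B. monom 1 (a + b))"
  by (simp add: Pol_def sum_product sum.cartesian_product monom_add1)

lemma poly_Pol: "poly (Pol A) 1 = int (card A)"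
  by (simp add: Pol_def poly_sum poly_monom)



definition G :: "nat \<Rightarrow> nat \<Rightarrow> nat \<Rightarrow> int poly \<Rightarrow> int" where
  "G D M z P = (\<Sum>k<D. coeff P (z + k * M))"

lemma G_add: "G D M z (P + Q) = G D M z P + G D M z Q"
  by (simp add: G_def sum.distrib)
lemma G_diff: "G D M z (P - Q) = G D M z P - G D M z Q"
  by (simp add: G_def sum_subtractf)
lemma G_ofnat: "G D M z (of_nat q * P) = int q * G D M z P"
  by (simp add: G_def sum_distrib_left of_nat_poly)
lemma G_smult: "G D M z (smult c P) = c * G D M z P"
  by (simp add: G_def sum_distrib_left)

lemma G_XM1:
  assumes "z < M"
  shows "G (Suc (Suc (degree g))) M z ((monom 1 M - 1) * g) = 0"
proof -
  let ?E = "Suc (degree g)"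
  have c: "coeff ((monom 1 M - 1) * g) i = (if i < M then 0 else coeff g (i - M)) - coeff g i" for i
    by (simp add: left_diff_distrib coeff_monom_mult)
  have "G (Suc ?E) M z ((monom 1 M - 1) * g) =
     (\<Sum>k<Suc ?E. (if z + k * M < M then 0 else coeff g (z + k * M - M))) - (\<Sum>k<Suc ?E. coeff g (z + k * M))"
    by (simp add: G_def c sum_subtractf)
  also have "(\<Sum>k<Suc ?E. (if z + k * M < M then 0 else coeff g (z + k * M - M))) = (\<Sum>k<?E. coeff g (z + k * M))"
    using assms by (subst sum.lessThan_Suc_shift) simp
  also have "(\<Sum>k<Suc ?E. coeff g (z + k * M)) = (\<Sum>k<?E. coeff g (z + k * M)) + coeff g (z + ?E * M)"
    by simp
  also have "coeff g (z + ?E * M) = 0"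
  proof (rule coeff_eq_0)
    have "M \<ge> 1" using assms by simp
    then have "?E * 1 \<le> ?E * M" by (rule mult_le_mono2)
    then show "degree g < z + ?E * M" by simp
  qed
  finally show ?thesis by simp
qed

lemma G_U:
  assumes "z < M"
  shows "G (Suc D) M z (U M) = 1"
proof -
  have "coeff (U M) i = (if i < M then 1 else 0)" for i
    by (simp add: U_def coeff_sum)
  then show ?thesis using assms unfolding G_def by (subst sum.lessThan_Suc_shift) simp
qed

lemma G_R:
  assumes "z < M" "finite S"
  shows "G (Suc D) M z (\<Sum>x\<in>S. monom 1 (f x mod M)) = int (card {x\<in>S. f x mod M = z})"
proof -
  have "coeff (\<Sum>x\<in>S. monom 1 (f x mod M)) i = int (card {x\<in>S. f x mod M = i})" for i
    using assms(2) by (simp add: coeff_sum sum.If_cases Int_def)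
  moreover have "card {x\<in>S. f x mod M = z + Suc k * M} = 0" for k
  proof -
    have "f x mod M < M" for x using assms(1) by simp
    moreover have "M \<le> z + Suc k * M" by simp
    ultimately have "{x\<in>S. f x mod M = z + Suc k * M} = {}" by (metis (mono_tags, lifting) empty_Collect_eq leD)
    then show ?thesis by (simp only: card.empty)
  qed
  ultimately show ?thesis unfolding G_def by (subst sum.lessThan_Suc_shift) simp
qed



lemma tiling_finite:
  assumes "tiling M A B" shows "finite A" "finite B" "A \<subseteq> {0..<M}" "B \<subseteq> {0..<M}"
  using assms unfolding tiling_def ZM_def by (auto intro: finite_subset)

lemma tiling_bij:
  assumes "tiling M A B"
  shows "bij_betw (\<lambda>(a,b). (a + b) mod M) (A \<times> B) {0..<M}"
proof -
  have t: "\<forall>z\<in>{0..<M}. \<exists>!(a, b). a \<in> A \<and> b \<in> B \<and> (a + b) mod M = z"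
    using assms unfolding tiling_def ZM_def by auto
  have M0: "M > 0" if "A \<times> B \<noteq> {}"
    using that assms unfolding tiling_def ZM_def by auto
  show ?thesis unfolding bij_betw_def
  proof
    show "inj_on (\<lambda>(a,b). (a + b) mod M) (A \<times> B)"
    proof (rule inj_onI, clarsimp)
      fix a b a' b' assume h: "a \<in> A" "b \<in> B" "a' \<in> A" "b' \<in> B" "(a + b) mod M = (a' + b') mod M"
      then have M: "M > 0" using M0 by auto
      then have "(a + b) mod M \<in> {0..<M}" by simp
      then have "\<exists>!(x, y). x \<in> A \<and> y \<in> B \<and> (x + y) mod M = (a + b) mod M" using t by blast
      then show "a = a' \<and> b = b'" using h by (auto simp: Ex1_def)
    qed
    show "(\<lambda>(a,b). (a + b) mod M) ` (A \<times> B) = {0..<M}"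
    proof
      show "(\<lambda>(a,b). (a + b) mod M) ` (A \<times> B) \<subseteq> {0..<M}"
      proof clarsimp
        fix a b assume "a \<in> A" "b \<in> B"
        then have "M > 0" using M0 by blast
        then show "(a + b) mod M < M" by simp
      qed
      show "{0..<M} \<subseteq> (\<lambda>(a,b). (a + b) mod M) ` (A \<times> B)"
      proof
        fix z assume "z \<in> {0..<M}"
        then obtain a b where "a \<in> A" "b \<in> B" "(a + b) mod M = z" using t by blast
        then show "z \<in> (\<lambda>(a,b). (a + b) mod M) ` (A \<times> B)" by force
      qed
    qed
  qed
qed

lemma tiling_card: "tiling M A B \<Longrightarrow> card A * card B = M"
  using bij_betw_same_card[OF tiling_bij] by (simp add: card_cartesian_product)

lemma aux_eq:
  fixes a1 x y r p c :: "'a::ab_group_add"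
  assumes "a1 = x + y"
  shows "r + y - c = (a1 - p) + (p - c) - (x - r)"
  using assms by (simp add: algebra_simps)

lemma tij_prime:
  assumes M: "M > 0" and T: "tiling M A B" and q: "prime q" and qM: "\<not> q dvd M"
  shows "tiling M ((\<lambda>a. q * a mod M) ` A) B"
proof -
  note fin = tiling_finite[OF T]
  define N where "N z = card {x \<in> A \<times> B. (\<lambda>(a,b). q * a + b) x mod M = z}" for z
  define c where "c = card A ^ (q - 1)"
  define XM where "XM = (monom (1::int) M - 1)"
  define R where "R = (\<Sum>x\<in>A \<times> B. monom (1::int) ((\<lambda>(a,b). q * a + b) x mod M))"
  obtain h where h: "(Pol A) ^ q = (\<Sum>a\<in>A. monom 1 (q * a)) + of_nat q * h"
    using frob_set[OF q fin(1)] by blast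
  have E_AB: "XM dvd (Pol A * Pol B - U M)"
  proof -
    have "U M = (\<Sum>z\<in>{0..<M}. monom 1 z)" by (simp add: U_def atLeast0LessThan)
    also have "\<dots> = (\<Sum>x\<in>A \<times> B. monom 1 ((\<lambda>(a,b). (a + b) mod M) x))"
      by (rule sum.reindex_bij_betw[OF tiling_bij[OF T], symmetric])
    finally have "U M = (\<Sum>(a,b)\<in>A \<times> B. monom 1 ((a + b) mod M))"
      by (simp add: case_prod_beta')
    then show ?thesis unfolding XM_def Pol_mult[OF fin(1,2)]
      by (auto intro!: XM1_dvd_sum XM1_dvd_mod)
  qed
  have E3: "XM dvd ((\<Sum>a\<in>A. monom 1 (q * a)) * Pol B - R)"
  proof -
    have "(\<Sum>a\<in>A. monom 1 (q * a)) * Pol B = (\<Sum>x\<in>A \<times> B. monom (1::int) ((\<lambda>(a,b). q * a + b) x))"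
      by (simp add: Pol_def sum_product sum.cartesian_product monom_add1 case_prod_beta')
    then show ?thesis unfolding XM_def R_def
      by (auto intro!: XM1_dvd_sum XM1_dvd_mod)
  qed
  have q1: "q \<ge> 1" using q prime_gt_0_nat by (simp add: Suc_leI)
  have E1: "XM dvd (Pol A ^ (q - 1) * (Pol A * Pol B) - Pol A ^ (q - 1) * U M)"
  proof -
    have "Pol A ^ (q - 1) * (Pol A * Pol B) - Pol A ^ (q - 1) * U M = Pol A ^ (q - 1) * (Pol A * Pol B - U M)"
      by (simp add: right_diff_distrib)
    then show ?thesis using E_AB by (simp add: dvd_mult)
  qed
  have E2: "XM dvd (Pol A ^ (q - 1) * U M - smult (of_nat c) (U M))"
    using mult_U[of M "Pol A ^ (q - 1)"] unfolding XM_def c_def by (simp add: poly_Pol)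
  have eq: "Pol A ^ (q - 1) * (Pol A * Pol B) = (\<Sum>a\<in>A. monom 1 (q * a)) * Pol B + of_nat q * (h * Pol B)"
  proof -
    have "Pol A ^ (q - 1) * (Pol A * Pol B) = Pol A ^ q * Pol B"
      using power_minus_mult[of q "Pol A"] q1 by (simp add: mult.assoc)
    then show ?thesis using h by (simp add: distrib_right mult.assoc)
  qed
  have "XM dvd (R + of_nat q * (h * Pol B) - smult (of_nat c) (U M))"
  proof -
    have X: "R + of_nat q * (h * Pol B) - smult (of_nat c) (U M) =
      (Pol A ^ (q - 1) * (Pol A * Pol B) - Pol A ^ (q - 1) * U M)
      + (Pol A ^ (q - 1) * U M - smult (of_nat c) (U M))
      - ((\<Sum>a\<in>A. monom 1 (q * a)) * Pol B - R)"
      using eq by (rule aux_eq)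
    show ?thesis unfolding X by (intro dvd_diff dvd_add E1 E2 E3)
  qed
  then obtain g where g: "R + of_nat q * (h * Pol B) - smult (of_nat c) (U M) = XM * g"
    by (auto elim: dvdE)
  define D where "D = Suc (degree g)"
  have key: "int q dvd int (N z) - int c" if z: "z < M" for z
  proof -
    have "G (Suc D) M z (R + of_nat q * (h * Pol B) - smult (of_nat c) (U M)) = 0"
      using g G_XM1[OF z, of g] unfolding XM_def D_def by simp
    then have "int (N z) + int q * G (Suc D) M z (h * Pol B) - int c = 0"
      unfolding G_diff G_add G_ofnat G_smult R_def N_def
      using G_U[OF z] G_R[OF z, of "A \<times> B"] fin by simp
    then have "int (N z) - int c = int q * (- G (Suc D) M z (h * Pol B))" by simp
    then show ?thesis by (rule dvdI)
  qed
  have cA: "card A dvd M" using dvd_triv_left[of "card A" "card B"] tiling_card[OF T] by simp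
  have qc: "\<not> q dvd c"
  proof
    assume "q dvd c"
    then have "q dvd card A" unfolding c_def using q prime_dvd_power by blast
    then show False using cA qM dvd_trans by blast
  qed
  have N1: "N z \<ge> 1" if "z < M" for z
  proof (rule ccontr)
    assume "\<not> N z \<ge> 1"
    then have "N z = 0" by simp
    then have "int q dvd int c" using key[OF that] by simp
    then show False using qc by (simp add: int_dvd_int_iff)
  qed
  have sumN: "(\<Sum>z\<in>{0..<M}. N z) = M"
  proof -
    define f where "f x = (case x of (a,b) \<Rightarrow> q * a + b) mod M" for x
    have "(\<Sum>z\<in>{0..<M}. (\<Sum>x\<in>{x. x \<in> A \<times> B \<and> f x = z}. (1::nat))) = (\<Sum>x\<in>A \<times> B. 1)"
      by (rule sum.group) (auto simp: fin M f_def)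
    then have "(\<Sum>z\<in>{0..<M}. N z) = card (A \<times> B)"
      unfolding N_def f_def by (simp add: case_prod_beta')
    then show ?thesis using tiling_card[OF T] by (simp add: card_cartesian_product)
  qed
  have Nz: "N z = 1" if "z < M" for z
  proof -
    have "(\<Sum>z\<in>{0..<M}. N z - 1) = (\<Sum>z\<in>{0..<M}. N z) - (\<Sum>z\<in>{0..<M}. 1)"
      using N1 by (subst sum_subtractf_nat) auto
    also have "\<dots> = 0" using sumN by simp
    finally have "\<forall>z\<in>{0..<M}. N z - 1 = 0" by simp
    then have "N z - 1 = 0" using that by simp
    then show ?thesis using N1[OF that] by simp
  qed
  show ?thesis unfolding tiling_def ZM_def
  proof (intro conjI ballI)
    show "(\<lambda>a. q * a mod M) ` A \<subseteq> {0..<M}" using M by auto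
    show "B \<subseteq> {0..<M}" using fin by simp
    fix z assume z: "z \<in> {0..<M}"
    then have "card {x \<in> A \<times> B. (\<lambda>(a,b). q * a + b) x mod M = z} = 1" using Nz N_def by simp
    then obtain pr where "{x \<in> A \<times> B. (\<lambda>(a,b). q * a + b) x mod M = z} = {pr}"
      by (rule card_1_singletonE)
    moreover obtain a b where "pr = (a, b)" by (cases pr)
    ultimately have ab: "{x \<in> A \<times> B. (\<lambda>(a,b). q * a + b) x mod M = z} = {(a,b)}" by simp
    then have abin: "a \<in> A" "b \<in> B" "(q * a + b) mod M = z" by auto
    show "\<exists>!(a', b'). a' \<in> (\<lambda>a. q * a mod M) ` A \<and> b' \<in> B \<and> (a' + b') mod M = z"
    proof (rule ex1I[of _ "(q * a mod M, b)"])
      show "case (q * a mod M, b) of (a', b') \<Rightarrow> a' \<in> (\<lambda>a. q * a mod M) ` A \<and> b' \<in> B \<and> (a' + b') mod M = z"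
        using abin by (auto simp: mod_add_left_eq)
      fix y assume "case y of (a', b') \<Rightarrow> a' \<in> (\<lambda>a. q * a mod M) ` A \<and> b' \<in> B \<and> (a' + b') mod M = z"
      then obtain a1 b1 where y: "y = (q * a1 mod M, b1)" "a1 \<in> A" "b1 \<in> B" "(q * a1 mod M + b1) mod M = z"
        by auto
      then have "(q * a1 + b1) mod M = z" by (simp add: mod_add_left_eq)
      then have "(a1, b1) \<in> {x \<in> A \<times> B. (\<lambda>(a,b). q * a + b) x mod M = z}" using y by auto
      then have "(a1, b1) = (a, b)" using ab by auto
      then show "y = (q * a mod M, b)" using y by simp
    qed
  qed
qed



lemma tij_unit:
  assumes M: "M > 0" and T: "tiling M A B" and cu: "coprime u M"
  shows "tiling M ((\<lambda>a. u * a mod M) ` A) B"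
  using cu
proof (induction u rule: less_induct)
  case (less u)
  note fin = tiling_finite[OF T]
  show ?case
  proof (cases "M = 1 \<or> u = 1")
    case True
    have "(\<lambda>a. u * a mod M) ` A = (\<lambda>a. a) ` A"
    proof (rule image_cong[OF refl])
      fix a assume "a \<in> A"
      then have "a < M" using fin by auto
      then show "u * a mod M = a" using True by auto
    qed
    then show ?thesis using T by simp
  next
    case False
    have u0: "u \<noteq> 0"
    proof
      assume "u = 0"
      then have "coprime 0 M" using less.prems by simp
      then show False using False by simp
    qed
    from False have "u \<noteq> 1" by simp
    then obtain q where q: "prime q" "q dvd u" using prime_factor_nat by blast
    then obtain u' where u': "u = q * u'" by (auto elim: dvdE)
    have "u' \<noteq> 0" using u' u0 by auto
    then have "u' < q * u'" using prime_gt_1_nat[OF q(1)] by (intro n_less_m_mult_n) auto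
    then have "u' < u" using u' by simp
    moreover have cu': "coprime u' M" "coprime q M" using less.prems u' by auto
    ultimately have T': "tiling M ((\<lambda>a. u' * a mod M) ` A) B" using less.IH by simp
    have qM: "\<not> q dvd M"
    proof
      assume "q dvd M"
      then have "is_unit q" using coprime_common_divisor[OF cu'(2) dvd_refl] by simp
      then show False using q by simp
    qed
    have "tiling M ((\<lambda>a. q * a mod M) ` ((\<lambda>a. u' * a mod M) ` A)) B"
      by (rule tij_prime[OF M T' q(1) qM])
    moreover have "(\<lambda>a. q * a mod M) ` ((\<lambda>a. u' * a mod M) ` A) = (\<lambda>a. u * a mod M) ` A"
      unfolding image_image u' by (simp add: mod_mult_right_eq mult.assoc)
    ultimately show ?thesis by simp
  qed
qed

lemma lift_unit:
  fixes N M u0 :: nat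
  assumes M: "M > 0" and c: "coprime u0 N"
  shows "\<exists>u. u mod N = u0 mod N \<and> coprime u M"
proof -
  define P where "P = {p. prime p \<and> p dvd M \<and> \<not> p dvd u0}"
  have finP: "finite P"
    by (rule finite_subset[of _ "{0..M}"]) (auto simp: P_def M dvd_imp_le)
  define r where "r = \<Prod>P"
  define u where "u = u0 + N * r"
  have "coprime u M"
  proof (rule ccontr)
    assume "\<not> coprime u M"
    then have "gcd u M \<noteq> 1" by (simp add: coprime_iff_gcd_eq_1)
    then obtain p where p: "prime p" "p dvd gcd u M" using prime_factor_nat by blast
    then have pu: "p dvd u" and pM: "p dvd M" by auto
    show False
    proof (cases "p dvd u0")
      case True
      have "\<not> p dvd N"
      proof
        assume "p dvd N"
        then have "is_unit p" using coprime_common_divisor[OF c True] by simp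
        then show False using p by simp
      qed
      moreover have "\<not> p dvd r"
      proof
        assume "p dvd r"
        then obtain p' where "p' \<in> P" "p dvd p'" unfolding r_def
          using prime_dvd_prod_iff[of P p "\<lambda>x. x"] finP p(1) by auto
        then have "p' = p" using p(1) primes_dvd_imp_eq[of p p'] by (auto simp: P_def)
        then show False using \<open>p' \<in> P\<close> True by (simp add: P_def)
      qed
      moreover have "p dvd N * r" using pu True unfolding u_def by (simp add: dvd_add_right_iff)
      ultimately show False using p(1) by (simp add: prime_dvd_mult_iff)
    next
      case False
      then have "p \<in> P" using p pM by (simp add: P_def)
      then have "p dvd r" unfolding r_def using dvd_prodI[OF finP, of p "\<lambda>x. x"] by simp
      then have "p dvd N * r" by simp
      then have "p dvd u0" using pu unfolding u_def by (simp add: dvd_add_left_iff)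
      then show False using False by simp
    qed
  qed
  moreover have "u mod N = u0 mod N" unfolding u_def by simp
  ultimately show ?thesis by blast
qed



lemma nat_mod_eq_int: "((a::nat) mod M = b mod M) \<longleftrightarrow> int M dvd int a - int b"
proof -
  have "(a mod M = b mod M) \<longleftrightarrow> int (a mod M) = int (b mod M)" by (rule of_nat_eq_iff[symmetric])
  also have "\<dots> \<longleftrightarrow> int a mod int M = int b mod int M" by (simp only: zmod_int)
  also have "\<dots> \<longleftrightarrow> int M dvd int a - int b" by (rule mod_eq_dvd_iff)
  finally show ?thesis .
qed

lemma unit_exists:
  fixes x y :: int and M :: nat
  assumes M: "M > 0" and g: "gcd x (int M) = gcd y (int M)"
  shows "\<exists>u::nat. coprime u M \<and> int M dvd int u * x - y"
proof -
  define d where "d = gcd x (int M)"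
  have d0: "d > 0" using M unfolding d_def by (simp add: le_neq_trans)
  have "d dvd x" unfolding d_def by simp
  then obtain e where e: "x = d * e" by (rule dvdE)
  have "d dvd y" unfolding d_def g by simp
  then obtain e' where e': "y = d * e'" by (rule dvdE)
  have "d dvd int M" unfolding d_def by simp
  then obtain Ni where Ni: "int M = d * Ni" by (rule dvdE)
  have "0 < d * Ni" using Ni M by simp
  then have Ni0: "Ni > 0" using d0 by (simp add: zero_less_mult_iff)
  have "d * gcd e Ni = d * 1"
  proof -
    have "d * gcd e Ni = gcd (d * e) (d * Ni)" using gcd_mult_distrib_int[of d e Ni] d0 by simp
    also have "\<dots> = d" unfolding e[symmetric] Ni[symmetric] d_def[symmetric] by (rule refl)
    finally show ?thesis by simp
  qed
  then have ce: "gcd e Ni = 1" using d0 by simp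
  have "d * gcd e' Ni = d * 1"
  proof -
    have "d * gcd e' Ni = gcd (d * e') (d * Ni)" using gcd_mult_distrib_int[of d e' Ni] d0 by simp
    also have "\<dots> = d" unfolding e'[symmetric] Ni[symmetric] g[symmetric] d_def[symmetric] by (rule refl)
    finally show ?thesis by simp
  qed
  then have ce': "coprime e' Ni" using d0 by (simp add: coprime_iff_gcd_eq_1)
  obtain s t where st: "s * e + t * Ni = 1" using bezout_int[of e Ni] ce by auto
  have cs: "coprime s Ni"
  proof (rule coprimeI)
    fix c assume "c dvd s" "c dvd Ni"
    then have "c dvd s * e + t * Ni" by simp
    then show "is_unit c" using st by simp
  qed
  define u0i where "u0i = (e' * s) mod Ni"
  have cu0i: "coprime u0i Ni" unfolding u0i_def using cs ce' Ni0 by simp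
  have u0i0: "u0i \<ge> 0" unfolding u0i_def using Ni0 by simp
  define N where "N = nat Ni"
  define u0 where "u0 = nat u0i"
  have "coprime (int u0) (int N)" using cu0i u0i0 Ni0 by (simp add: u0_def N_def)
  then have "coprime u0 N" by simp
  then obtain u where u: "u mod N = u0 mod N" "coprime u M" using lift_unit[OF M] by blast
  have "Ni dvd int u - u0i"
  proof -
    have "int u mod int N = int u0 mod int N" by (simp only: zmod_int[symmetric] u(1))
    then have "int N dvd int u - int u0" by (simp add: mod_eq_dvd_iff)
    then show ?thesis using u0i0 Ni0 by (simp add: u0_def N_def)
  qed
  moreover have "Ni dvd u0i - e' * s" unfolding u0i_def using mod_eq_dvd_iff[of "e' * s mod Ni" Ni "e' * s"] by simp
  ultimately have "Ni dvd (int u - u0i) + (u0i - e' * s)" by (rule dvd_add)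
  then have "Ni dvd int u - e' * s" by simp
  then have "Ni dvd (int u - e' * s) * e" by simp
  moreover have "(int u - e' * s) * e = int u * e - e' + e' * t * Ni"
  proof -
    have se: "s * e = 1 - t * Ni" using st by simp
    have "(int u - e' * s) * e = int u * e - e' * (s * e)" by (simp add: algebra_simps)
    also have "\<dots> = int u * e - e' * (1 - t * Ni)" by (simp only: se)
    also have "\<dots> = int u * e - e' + e' * t * Ni" by (simp add: algebra_simps)
    finally show ?thesis .
  qed
  ultimately have "Ni dvd (int u * e - e' + e' * t * Ni) - e' * t * Ni" by (intro dvd_diff) auto
  then have "Ni dvd int u * e - e'" by simp
  then have "d * Ni dvd d * (int u * e - e')" by simp
  moreover have "d * (int u * e - e') = int u * x - y" unfolding e e' by (simp add: algebra_simps)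
  ultimately have "int M dvd int u * x - y" unfolding Ni by simp
  then show ?thesis using u(2) by blast
qed



lemma sands:
  assumes M: "M > 0" and T: "tiling M A B"
    and a: "a \<in> A" and a': "a' \<in> A" and b: "b \<in> B" and b': "b' \<in> B"
    and ne: "a \<noteq> a'"
    and g: "gcd (int a - int a') (int M) = gcd (int b - int b') (int M)"
  shows False
proof -
  note fin = tiling_finite[OF T]
  have g2: "gcd (int a - int a') (int M) = gcd (int b' - int b) (int M)"
    using g gcd_neg1_int[of "int b - int b'" "int M"] by simp
  obtain u where u: "coprime u M" "int M dvd int u * (int a - int a') - (int b' - int b)"
    using unit_exists[OF M g2] by blast
  note T' = tij_unit[OF M T u(1)]
  have "int M dvd int (u * a + b) - int (u * a' + b')"
    using u(2) by (simp add: algebra_simps)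
  then have eq: "(u * a + b) mod M = (u * a' + b') mod M" by (simp only: nat_mod_eq_int)
  define z where "z = (u * a + b) mod M"
  have z: "z \<in> ZM M" unfolding z_def ZM_def using M by simp
  have "\<exists>!(x, y). x \<in> (\<lambda>a. u * a mod M) ` A \<and> y \<in> B \<and> (x + y) mod M = z"
    using T' z unfolding tiling_def by blast
  moreover have "(u * a mod M) \<in> (\<lambda>a. u * a mod M) ` A \<and> b \<in> B \<and> (u * a mod M + b) mod M = z"
    using a b unfolding z_def by (simp add: mod_add_left_eq)
  moreover have "(u * a' mod M) \<in> (\<lambda>a. u * a mod M) ` A \<and> b' \<in> B \<and> (u * a' mod M + b') mod M = z"
    using a' b' eq unfolding z_def by (simp add: mod_add_left_eq)
  ultimately have "(u * a mod M, b) = (u * a' mod M, b')"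
  proof -
    assume ex: "\<exists>!(x, y). x \<in> (\<lambda>a. u * a mod M) ` A \<and> y \<in> B \<and> (x + y) mod M = z"
      and p1: "(u * a mod M) \<in> (\<lambda>a. u * a mod M) ` A \<and> b \<in> B \<and> (u * a mod M + b) mod M = z"
      and p2: "(u * a' mod M) \<in> (\<lambda>a. u * a mod M) ` A \<and> b' \<in> B \<and> (u * a' mod M + b') mod M = z"
    from ex obtain w where "\<forall>w'. (case w' of (x, y) \<Rightarrow> x \<in> (\<lambda>a. u * a mod M) ` A \<and> y \<in> B \<and> (x + y) mod M = z) \<longrightarrow> w' = w"
      by (rule ex1E) blast
    then have "(u * a mod M, b) = w" "(u * a' mod M, b') = w" using p1 p2 by auto
    then show ?thesis by simp
  qed
  then have "b = b'" by simp
  then have "gcd (int a - int a') (int M) = int M" using g by simp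
  then have "int M dvd int a - int a'" by (metis gcd_dvd1)
  then have "a mod M = a' mod M" by (simp only: nat_mod_eq_int)
  moreover have "a < M" "a' < M" using a a' fin by auto
  ultimately show False using ne by simp
qed



lemma decomp:
  assumes M: "M > 0" and p: "prime (p::nat)" and pM: "p dvd M"
  shows "multiplicity p M \<ge> 1 \<and> (\<exists>m. M = p ^ multiplicity p M * m \<and> \<not> p dvd m)"
proof -
  have "multiplicity p M > 0" using pM p M by (simp add: multiplicity_gt_zero_iff prime_multiplicity_gt_zero_iff)
  moreover obtain m where "M = p ^ multiplicity p M * m" "\<not> p dvd m"
  proof -
    have "p \<noteq> 1" using p by auto
    then show ?thesis using multiplicity_decompose'[of M p] M that by auto
  qed
  ultimately show ?thesis by auto
qed

lemma gcd_div:
  fixes P g Md Mi h :: int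
  assumes P: "prime P" and Mi: "Mi = P * Md" and gM: "g dvd Mi" and ng: "\<not> P ^ n dvd g"
    and PM: "P ^ n dvd Mi"
  shows "g dvd Md"
proof -
  obtain h where h: "Mi = g * h" using gM by (auto elim: dvdE)
  have "P dvd h"
  proof (rule ccontr)
    assume "\<not> P dvd h"
    then have "coprime P h" using P prime_imp_coprime by blast
    then have "coprime (P ^ n) h" by simp
    moreover have "P ^ n dvd g * h" using PM h by simp
    ultimately have "P ^ n dvd g" using coprime_dvd_mult_left_iff by blast
    then show False using ng by simp
  qed
  then obtain h' where h': "h = P * h'" by (auto elim: dvdE)
  have "P * Md = P * (g * h')" using Mi h h' by (simp only: ac_simps)
  moreover have "P \<noteq> 0" using P by auto
  ultimately have "Md = g * h'" by simp
  then show ?thesis by simp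
qed

lemma val_split:
  fixes P X Y :: int
  assumes n: "n \<ge> 1" and D1: "P ^ (n - 1) dvd X + Y" and D2: "\<not> P ^ n dvd X + Y"
    and XY: "P ^ n dvd X \<or> P ^ n dvd Y"
  shows "(P ^ n dvd X \<and> P ^ (n - 1) dvd Y \<and> \<not> P ^ n dvd Y) \<or>
         (P ^ n dvd Y \<and> P ^ (n - 1) dvd X \<and> \<not> P ^ n dvd X)"
proof -
  have pp: "P ^ (n - 1) dvd P ^ n" using n by (simp add: le_imp_power_dvd)
  show ?thesis
  proof (cases "P ^ n dvd X")
    case True
    have "P ^ (n - 1) dvd (X + Y) - X" using D1 True pp by (meson dvd_diff dvd_trans)
    moreover have "\<not> P ^ n dvd Y" using True D2 by (meson dvd_add)
    ultimately show ?thesis using True by simp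
  next
    case False
    then have Y: "P ^ n dvd Y" using XY by simp
    have "P ^ (n - 1) dvd (X + Y) - Y" using D1 Y pp by (meson dvd_diff dvd_trans)
    then show ?thesis using Y False by simp
  qed
qed



lemma pair_lemma:
  assumes M: "M > 0" and p: "prime p" and pM: "p dvd M" and T: "tiling M A B"
    and a: "a \<in> A" and a': "a' \<in> A" and b: "b \<in> B" and b': "b' \<in> B"
    and z: "(a + b) mod M \<in> fiber M p x" and z': "(a' + b') mod M \<in> fiber M p x"
    and ne: "(a + b) mod M \<noteq> (a' + b') mod M"
  shows "(int p ^ multiplicity p M dvd int a - int a' \<and> int p ^ (multiplicity p M - 1) dvd int b - int b'
            \<and> \<not> int p ^ multiplicity p M dvd int b - int b') \<or>
         (int p ^ multiplicity p M dvd int b - int b' \<and> int p ^ (multiplicity p M - 1) dvd int a - int a'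
            \<and> \<not> int p ^ multiplicity p M dvd int a - int a')"
proof -
  define n where "n = multiplicity p M"
  define P where "P = int p"
  define Md where "Md = M div p"
  obtain m where n1: "n \<ge> 1" and Mm: "M = p ^ n * m" and pm: "\<not> p dvd m"
    using decomp[OF M p pM] unfolding n_def by blast
  have MdE: "Md = p ^ (n - 1) * m"
  proof -
    have "M = p * (p ^ (n - 1) * m)" using Mm n1 by (metis mult.assoc power_minus_mult mult.commute One_nat_def Suc_le_eq)
    then show ?thesis unfolding Md_def using p prime_gt_0_nat by simp
  qed
  have MP: "int M = P * int Md" unfolding P_def MdE using Mm n1
    by (simp add: mult.assoc[symmetric] power_minus_mult[symmetric] mult.commute)
  obtain k where k: "k < p" "(a + b) mod M = (x + k * Md) mod M"
    using z unfolding fiber_def Md_def by auto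
  obtain k' where k': "k' < p" "(a' + b') mod M = (x + k' * Md) mod M"
    using z' unfolding fiber_def Md_def by auto
  have kk: "k \<noteq> k'" using k k' ne by auto
  define D where "D = (int a - int a') + (int b - int b')"
  have h1: "int M dvd int (a + b) - int (x + k * Md)" using k(2) by (simp only: nat_mod_eq_int)
  have h2: "int M dvd int (a' + b') - int (x + k' * Md)" using k'(2) by (simp only: nat_mod_eq_int)
  have "int M dvd (int (a + b) - int (x + k * Md)) - (int (a' + b') - int (x + k' * Md))"
    using h1 h2 by (rule dvd_diff)
  moreover have "(int (a + b) - int (x + k * Md)) - (int (a' + b') - int (x + k' * Md))
      = D - (int k - int k') * int Md" unfolding D_def by (simp add: algebra_simps)
  ultimately obtain t where t: "D - (int k - int k') * int Md = int M * t" by (auto elim: dvdE)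
  define c where "c = (int k - int k') + P * t"
  have Dc: "D = int Md * c" using t MP unfolding c_def by (simp add: algebra_simps)
  have pc: "\<not> P dvd c"
  proof
    assume "P dvd c"
    then have "P dvd int k - int k'" unfolding c_def by (simp add: dvd_add_left_iff)
    then have "k mod p = k' mod p" unfolding P_def by (simp only: nat_mod_eq_int)
    then show False using k(1) k'(1) kk by simp
  qed
  have PMd: "int Md = P ^ (n - 1) * int m" unfolding MdE P_def by simp
  have D1: "P ^ (n - 1) dvd D" unfolding Dc PMd by simp
  have D2: "\<not> P ^ n dvd D"
  proof
    assume "P ^ n dvd D"
    moreover have "P ^ n = P ^ (n - 1) * P" using power_minus_mult[of n P] n1 by simp
    ultimately have "P ^ (n - 1) * P dvd P ^ (n - 1) * (int m * c)" unfolding Dc PMd by (simp add: ac_simps)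
    moreover have "P ^ (n - 1) \<noteq> 0" unfolding P_def using p by auto
    ultimately have "P dvd int m * c" using dvd_mult_cancel_left by blast
    moreover have "prime P" unfolding P_def using p by simp
    ultimately have "P dvd int m \<or> P dvd c" using prime_dvd_mult_iff by blast
    then show False using pc pm unfolding P_def by simp
  qed
  have PnM: "P ^ n dvd int M" unfolding Mm P_def by simp
  have XY: "P ^ n dvd int a - int a' \<or> P ^ n dvd int b - int b'"
  proof (rule ccontr)
    assume nXY: "\<not> (P ^ n dvd int a - int a' \<or> P ^ n dvd int b - int b')"
    have primeP: "prime P" unfolding P_def using p by simp
    define g where "g = gcd (int a - int a') (int M)"
    define g' where "g' = gcd (int b - int b') (int M)"
    have "\<not> P ^ n dvd g" using nXY unfolding g_def by (meson dvd_trans gcd_dvd1)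
    then have gMd: "g dvd int Md" using gcd_div[OF primeP MP _ _ PnM] unfolding g_def by simp
    have "\<not> P ^ n dvd g'" using nXY unfolding g'_def by (meson dvd_trans gcd_dvd1)
    then have gMd': "g' dvd int Md" using gcd_div[OF primeP MP _ _ PnM] unfolding g'_def by simp
    have gD: "g dvd D" using gMd Dc by simp
    have g'D: "g' dvd D" using gMd' Dc by simp
    have "g dvd D - (int a - int a')" by (rule dvd_diff[OF gD]) (unfold g_def, rule gcd_dvd1)
    then have "g dvd int b - int b'" unfolding D_def by simp
    then have gg: "g dvd g'" unfolding g'_def g_def by simp
    have "g' dvd D - (int b - int b')" by (rule dvd_diff[OF g'D]) (unfold g'_def, rule gcd_dvd1)
    then have "g' dvd int a - int a'" unfolding D_def by simp
    then have "g' dvd g" unfolding g'_def g_def by simp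
    then have "g = g'" using gg unfolding g_def g'_def by (intro zdvd_antisym_nonneg) auto
    moreover have "a \<noteq> a'" using nXY by auto
    ultimately show False using sands[OF M T a a' b b'] unfolding g_def g'_def by blast
  qed
  have "D = (int a - int a') + (int b - int b')" by (simp add: D_def)
  then show ?thesis using val_split[OF n1, of P "int a - int a'" "int b - int b'"] D1 D2 XY
    unfolding n_def P_def by simp
qed



lemma tiling_uniq:
  assumes T: "tiling M A B" and "a \<in> A" "a' \<in> A" "b \<in> B" "b' \<in> B"
    and "(a + b) mod M = (a' + b') mod M"
  shows "a = a' \<and> b = b'"
  using bij_betw_imp_inj_on[OF tiling_bij[OF T]] assms(2-6)
  by (auto dest: inj_onD[where x="(a,b)" and y="(a',b')"])

lemma Sigma_swap: "SigmaA M B A Z = SigmaB M A B Z" "SigmaB M B A Z = SigmaA M A B Z"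
  unfolding SigmaA_def SigmaB_def by (auto simp: add.commute)

theorem lemma4p3:
  fixes M p x :: nat and A B :: "nat set"
  assumes "M > 0" and "prime p" and "p dvd M"
    and "tiling M A B"
    and "x \<in> ZM M"
  shows "(splits_with_parity M p A B (fiber M p x) \<or> splits_with_parity M p B A (fiber M p x)) \<and>
         (\<forall>a \<in> SigmaA M A B (fiber M p x).
            SigmaA M A B (fiber M p x) \<subseteq> Pi_M M a (p ^ (multiplicity p M - 1))) \<and>
         (\<forall>b \<in> SigmaB M A B (fiber M p x).
            SigmaB M A B (fiber M p x) \<subseteq> Pi_M M b (p ^ (multiplicity p M - 1)))"
proof -
  note M = assms(1) and p = assms(2) and pM = assms(3) and T = assms(4)
  note fin = tiling_finite[OF T]
  define Z where "Z = fiber M p x"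
  define n where "n = multiplicity p M"
  define Pn where "Pn = int p ^ n"
  define Pn1 where "Pn1 = int p ^ (n - 1)"
  define good where "good a b \<longleftrightarrow> a \<in> A \<and> b \<in> B \<and> (a + b) mod M \<in> Z" for a b
  have F: "(a = a' \<and> b = b') \<or>
      (Pn dvd int a - int a' \<and> Pn1 dvd int b - int b' \<and> \<not> Pn dvd int b - int b') \<or>
      (Pn dvd int b - int b' \<and> Pn1 dvd int a - int a' \<and> \<not> Pn dvd int a - int a')"
    if "good a b" "good a' b'" for a b a' b'
  proof (cases "(a + b) mod M = (a' + b') mod M")
    case True
    then show ?thesis using tiling_uniq[OF T] that unfolding good_def by blast
  next
    case False
    then show ?thesis using pair_lemma[OF M p pM T, of a a' b b' x] that
      unfolding good_def Pn_def Pn1_def n_def Z_def by blast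
  qed
  have Fi: "Pn1 dvd int a - int a' \<and> Pn1 dvd int b - int b'" if "good a b" "good a' b'" for a b a' b'
  proof -
    have "Pn1 dvd Pn" unfolding Pn_def Pn1_def by (simp add: le_imp_power_dvd)
    then show ?thesis using F[OF that] by (auto intro: dvd_trans)
  qed
  have Fii: "Pn dvd int a - int a' \<or> Pn dvd int b - int b'" if "good a b" "good a' b'" for a b a' b'
    using F[OF that] by auto
  have Fiii: "\<not> Pn dvd int b - int b'" if "good a b" "good a' b'" "b \<noteq> b'" "Pn dvd int a - int a'" for a b a' b'
    using F[OF that(1,2)] that(3,4) by auto
  have Fiv: "\<not> Pn dvd int a - int a'" if "good a b" "good a' b'" "a \<noteq> a'" "Pn dvd int b - int b'" for a b a' b'
    using F[OF that(1,2)] that(3,4) by auto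
  have SA: "\<exists>b. good a b" if "a \<in> SigmaA M A B Z" for a
    using that unfolding SigmaA_def good_def by auto
  have SB: "\<exists>a. good a b" if "b \<in> SigmaB M A B Z" for b
    using that unfolding SigmaB_def good_def by auto
  have part1: "splits_with_parity M p A B Z \<or> splits_with_parity M p B A Z"
  proof (cases "\<forall>a b a' b'. good a b \<longrightarrow> good a' b' \<longrightarrow> Pn dvd int a - int a'")
    case True
    have "splits_with_parity M p A B Z"
      unfolding splits_with_parity_def Let_def n_def[symmetric]
    proof (intro conjI ballI impI)
      fix a a' assume aS: "a \<in> SigmaA M A B Z" and a'S: "a' \<in> SigmaA M A B Z"
      obtain b b' where "good a b" "good a' b'" using SA[OF aS] SA[OF a'S] by blast
      then have "Pn dvd int a - int a'" using True by blast
      then show "int (p ^ n) dvd int a - int a'" unfolding Pn_def by simp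
    next
      fix b b' assume bS: "b \<in> SigmaB M A B Z" and b'S: "b' \<in> SigmaB M A B Z" and "b \<noteq> b'"
      moreover obtain a a' where g: "good a b" "good a' b'" using SB[OF bS] SB[OF b'S] by blast
      moreover have "Pn dvd int a - int a'" using True g by blast
      ultimately show "int (p ^ (n - 1)) dvd int b - int b'" "\<not> int (p ^ n) dvd int b - int b'"
        using Fi[OF g] Fiii[OF g] unfolding Pn_def Pn1_def by simp_all
    qed
    then show ?thesis by blast
  next
    case False
    then obtain a1 b1 a2 b2 where g12: "good a1 b1" "good a2 b2" and n12: "\<not> Pn dvd int a1 - int a2"
      by blast
    have b12: "Pn dvd int b1 - int b2" using Fii[OF g12] n12 by simp
    have toB1: "Pn dvd int b - int b1" if g: "good a b" for a b
    proof -
      have "Pn dvd int b - int b1 \<or> Pn dvd int b - int b2"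
      proof (rule ccontr)
        assume "\<not> (Pn dvd int b - int b1 \<or> Pn dvd int b - int b2)"
        then have "Pn dvd int a - int a1" "Pn dvd int a - int a2"
          using Fii[OF g g12(1)] Fii[OF g g12(2)] by auto
        then have "Pn dvd (int a - int a2) - (int a - int a1)" by (rule dvd_diff[rotated])
        then show False using n12 by simp
      qed
      moreover have "Pn dvd int b - int b2 \<Longrightarrow> Pn dvd int b - int b1"
      proof -
        assume "Pn dvd int b - int b2"
        moreover have "Pn dvd int b2 - int b1" using b12 dvd_minus_iff[of Pn "int b1 - int b2"] by simp
        ultimately have "Pn dvd (int b - int b2) + (int b2 - int b1)" by (rule dvd_add)
        then show ?thesis by simp
      qed
      ultimately show ?thesis by blast
    qed
    have allB: "Pn dvd int b - int b'" if "good a b" "good a' b'" for a b a' b'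
    proof -
      have "Pn dvd (int b - int b1) - (int b' - int b1)"
        using toB1[OF that(1)] toB1[OF that(2)] by (rule dvd_diff)
      then show ?thesis by simp
    qed
    have "splits_with_parity M p B A Z"
      unfolding splits_with_parity_def Let_def n_def[symmetric] Sigma_swap[of M B A Z]
    proof (intro conjI ballI impI)
      fix b b' assume bS: "b \<in> SigmaB M A B Z" and b'S: "b' \<in> SigmaB M A B Z"
      obtain a a' where "good a b" "good a' b'" using SB[OF bS] SB[OF b'S] by blast
      then have "Pn dvd int b - int b'" using allB by blast
      then show "int (p ^ n) dvd int b - int b'" unfolding Pn_def by simp
    next
      fix a a' assume aS: "a \<in> SigmaA M A B Z" and a'S: "a' \<in> SigmaA M A B Z" and "a \<noteq> a'"
      moreover obtain b b' where g: "good a b" "good a' b'" using SA[OF aS] SA[OF a'S] by blast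
      ultimately show "int (p ^ (n - 1)) dvd int a - int a'" "\<not> int (p ^ n) dvd int a - int a'"
        using allB[OF g] Fi[OF g] Fiv[OF g] unfolding Pn_def Pn1_def by simp_all
    qed
    then show ?thesis by blast
  qed
  have part2: "SigmaA M A B Z \<subseteq> Pi_M M a (p ^ (n - 1))" if aS: "a \<in> SigmaA M A B Z" for a
  proof
    fix a' assume a': "a' \<in> SigmaA M A B Z"
    obtain b b' where g: "good a b" "good a' b'" using SA[OF aS] SA[OF a'] by blast
    have "a' \<in> ZM M" using a' fin unfolding SigmaA_def ZM_def by auto
    then show "a' \<in> Pi_M M a (p ^ (n - 1))" using Fi[OF g] unfolding Pi_M_def Pn1_def by simp
  qed
  have part3: "SigmaB M A B Z \<subseteq> Pi_M M b (p ^ (n - 1))" if bS: "b \<in> SigmaB M A B Z" for b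
  proof
    fix b' assume b': "b' \<in> SigmaB M A B Z"
    obtain a a' where g: "good a b" "good a' b'" using SB[OF bS] SB[OF b'] by blast
    have "b' \<in> ZM M" using b' fin unfolding SigmaB_def ZM_def by auto
    then show "b' \<in> Pi_M M b (p ^ (n - 1))" using Fi[OF g] unfolding Pi_M_def Pn1_def by simp
  qed
  show ?thesis using part1 part2 part3 unfolding Z_def n_def by blast
qed

end
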